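(* Let $J$ satisfy hypothesis (H) below, let $D\subset\mathbb{R}^N$ be a bounded set and let $\Omega_1,\Omega_2\subset D$ be two bounded open sets. Then there exists $C>0$ depending only on the measures of $\Omega_1$ and $\Omega_2$ such that $$\|\tilde{\mathcal{J}}_{\Omega_1}-\tilde{\mathcal{J}}_{\Omega_2}\|_{\mathcal{L}(L^2(D))}\leq C\|J\|_{L^\infty(\mathbb{R}^N)}\left[|\Omega_1\setminus\Omega_2|+|\Omega_2\setminus\Omega_1|\right]^{1/2}.$$ In particular, $\|\tilde{\mathcal{J}}_{\Omega_1}-\tilde{\mathcal{J}}_{\Omega_2}\|_{\mathcal{L}(L^2(D))}\to0$ if $|\Omega_1\setminus\Omega_2|+|\Omega_2\setminus\Omega_1|\to0$ and $\|J\|_{L^\infty(\mathbb{R}^N)}<\infty$.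
   Context: Hypothesis (H): $J\in\mathcal{C}(\mathbb{R}^N,\mathbb{R})$ is nonnegative, spherically symmetric and radially decreasing, with $J(0)>0$ and $\int_{\mathbb{R}^N}J=1$. For a bounded open $\Omega\subset D$, $\tilde{\mathcal{J}}_\Omega:L^2(D)\to L^2(D)$ is defined by $\tilde{\mathcal{J}}_\Omega u(x)=\int_\Omega J(x-y)u(y)\,dy$ for $x\in\Omega$ and $\tilde{\mathcal{J}}_\Omega u(x)=0$ for $x\in D\setminus\Omega$. $|\cdot|$ is Lebesgue measure. *)

theory Defs
  imports "HOL-Analysis.Analysis" "HOL-Probability.Essential_Supremum"
begin

definition hypH :: "('a::euclidean_space \<Rightarrow> real) \<Rightarrow> bool" where
  "hypH J \<longleftrightarrow> continuous_on UNIV J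
     \<and> (\<forall>x. 0 \<le> J x)
     \<and> (\<forall>x y. norm x = norm y \<longrightarrow> J x = J y)
     \<and> (\<forall>x y. norm x \<le> norm y \<longrightarrow> J y \<le> J x)
     \<and> J 0 > 0
     \<and> integrable lborel J \<and> integral\<^sup>L lborel J = 1"

definition Jt :: "('a::euclidean_space \<Rightarrow> real) \<Rightarrow> 'a set \<Rightarrow> ('a \<Rightarrow> real) \<Rightarrow> 'a \<Rightarrow> real" where
  "Jt J \<Omega> u x = (if x \<in> \<Omega> then (LINT y:\<Omega>|lebesgue. J (x - y) * u y) else 0)"

definition in_L2 :: "'a::euclidean_space set \<Rightarrow> ('a \<Rightarrow> real) \<Rightarrow> bool" where
  "in_L2 D u \<longleftrightarrow> u \<in> borel_measurable lebesgue \<and> set_integrable lebesgue D (\<lambda>x. (u x)\<^sup>2)"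

definition L2norm :: "'a::euclidean_space set \<Rightarrow> ('a \<Rightarrow> real) \<Rightarrow> real" where
  "L2norm D u = sqrt (LINT x:D|lebesgue. (u x)\<^sup>2)"

definition Linf_norm :: "('a::euclidean_space \<Rightarrow> real) \<Rightarrow> real" where
  "Linf_norm J = real_of_ereal (esssup lborel (\<lambda>x. ereal \<bar>J x\<bar>))"

end

theory Submission
  imports Defs
begin


lemma hypH_bound: assumes "hypH J" shows "0 \<le> J x" "J x \<le> J 0"
proof -
  have "\<forall>x. 0 \<le> J x" "\<forall>x y. norm x \<le> norm y \<longrightarrow> J y \<le> J x"
    using assms unfolding hypH_def by blast+
  then show "0 \<le> J x" "J x \<le> J 0" by auto
qed

lemma hypH_cont: assumes "hypH J" shows "continuous_on UNIV J"
  using assms unfolding hypH_def by blast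


lemma Linf_hypH: fixes J :: "'a::euclidean_space \<Rightarrow> real" assumes H: "hypH J" shows "Linf_norm J = J 0"
proof -
  have cont: "continuous_on UNIV J" by (rule hypH_cont[OF H])
  have Jm: "J \<in> borel_measurable lborel" using cont by (simp add: borel_measurable_continuous_onI)
  have m: "(\<lambda>x. ereal \<bar>J x\<bar>) \<in> borel_measurable lborel" using Jm by measurable
  have le: "esssup lborel (\<lambda>x. ereal \<bar>J x\<bar>) \<le> ereal (J 0)"
    by (rule esssup_I[OF m]) (auto simp: hypH_bound[OF H])
  have ge: "ereal (J 0) \<le> esssup lborel (\<lambda>x. ereal \<bar>J x\<bar>)"
  proof (rule ccontr)
    assume "\<not> ?thesis"
    then have "esssup lborel (\<lambda>x. ereal \<bar>J x\<bar>) < ereal (J 0)" by simp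
    then obtain c where c1: "esssup lborel (\<lambda>x. ereal \<bar>J x\<bar>) < ereal c" and c2: "c < J 0"
      using ereal_dense2 by (metis less_ereal.simps(1))
    have AE: "AE x in lborel. J x < c"
      using esssup_AE[of "(\<lambda>x. ereal \<bar>J x\<bar>)" lborel]
    proof (rule eventually_mono)
      fix x assume "ereal \<bar>J x\<bar> \<le> esssup lborel (\<lambda>x. ereal \<bar>J x\<bar>)"
      then have "ereal \<bar>J x\<bar> < ereal c" using c1 by (rule le_less_trans)
      then show "J x < c" by simp
    qed
    have "open {x. c < J x}"
      using cont by (intro open_Collect_less) auto
    moreover have "0 \<in> {x. c < J x}" using c2 by simp
    ultimately obtain r where r: "r > 0" "ball 0 r \<subseteq> {x. c < J x}"
      by (meson open_contains_ball)
    have "AE x in lborel. x \<notin> ball (0::'a) r"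
      using AE by (rule eventually_mono) (use r in auto)
    then have "emeasure lborel (ball (0::'a) r) = 0"
      by (subst (asm) AE_iff_measurable[of "ball 0 r"]) auto
    then have "measure lborel (ball (0::'a) r) = 0" by (simp add: measure_def)
    with content_ball_pos[OF r(1), of 0] show False by simp
  qed
  show ?thesis unfolding Linf_norm_def using le ge by (simp add: antisym)
qed

lemma cont_leb_meas:
  fixes f :: "'a::euclidean_space \<Rightarrow> real"
  assumes "continuous_on UNIV f" shows "f \<in> borel_measurable lebesgue"
proof -
  have "f \<in> borel_measurable borel" using assms by (rule borel_measurable_continuous_onI)
  then have "f \<in> borel_measurable lborel" by simp
  then show ?thesis by (rule measurable_completion)
qed

lemma J_shift_meas:
  assumes "hypH J" shows "(\<lambda>y. J (x - y)) \<in> borel_measurable lebesgue"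
proof (rule cont_leb_meas)
  have "continuous_on UNIV (\<lambda>y. x - (y::'a))" by (intro continuous_intros)
  from continuous_on_compose2[OF hypH_cont[OF assms] this]
  show "continuous_on UNIV (\<lambda>y. J (x - y))" by simp
qed

lemma L2_int:
  fixes u :: "'a::euclidean_space \<Rightarrow> real"
  assumes "in_L2 D u" "A \<subseteq> D" "A \<in> lmeasurable"
  shows "set_integrable lebesgue A u"
proof -
  have um: "u \<in> borel_measurable lebesgue" using assms(1) by (simp add: in_L2_def)
  have A: "A \<in> sets lebesgue" "emeasure lebesgue A < \<infinity>" using assms(3)
    by (auto simp: fmeasurable_def)
  have s2: "set_integrable lebesgue A (\<lambda>x. (u x)\<^sup>2)"
    using assms(1,2) A(1) unfolding in_L2_def by (blast intro: set_integrable_subset)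
  have i: "integrable lebesgue (\<lambda>x. indicator A x + indicator A x * (u x)\<^sup>2 :: real)"
    using s2 unfolding set_integrable_def
    by (intro Bochner_Integration.integrable_add integrable_real_indicator[OF A]) simp
  show ?thesis unfolding set_integrable_def
  proof (rule Bochner_Integration.integrable_bound[OF i])
    show "(\<lambda>x. indicat_real A x *\<^sub>R u x) \<in> borel_measurable lebesgue"
      using um A(1) by measurable
    show "AE x in lebesgue. norm (indicat_real A x *\<^sub>R u x) \<le> norm (indicator A x + indicator A x * (u x)\<^sup>2 :: real)"
    proof (rule AE_I2)
      fix x
      have "\<bar>u x\<bar> \<le> 1 + (u x)\<^sup>2"
      proof (cases "\<bar>u x\<bar> \<le> 1")
        case True then show ?thesis by (simp add: add_increasing2)
      next
        case False
        then have "\<bar>u x\<bar> * 1 \<le> \<bar>u x\<bar> * \<bar>u x\<bar>" by (intro mult_left_mono) auto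
        then show ?thesis by (simp add: power2_eq_square)
      qed
      then show "norm (indicat_real A x *\<^sub>R u x) \<le> norm (indicator A x + indicator A x * (u x)\<^sup>2 :: real)"
        by (cases "x \<in> A") auto
    qed
  qed
qed


lemma J_int:
  fixes u :: "'a::euclidean_space \<Rightarrow> real"
  assumes H: "hypH J" and u: "set_integrable lebesgue A u"
  shows "set_integrable lebesgue A (\<lambda>y. J (x - y) * u y)"
proof -
  have eq: "(\<lambda>y. indicator A y *\<^sub>R (J (x - y) * u y)) = (\<lambda>y. J (x - y) * (indicator A y *\<^sub>R u y))"
    by (auto simp: fun_eq_iff)
  have ui: "integrable lebesgue (\<lambda>y. indicator A y *\<^sub>R u y)" using u by (simp add: set_integrable_def)
  show ?thesis unfolding set_integrable_def eq
  proof (rule Bochner_Integration.integrable_bound)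
    show "integrable lebesgue (\<lambda>y. J 0 * (indicator A y *\<^sub>R u y))"
      using ui by (rule integrable_mult_right)
    show "(\<lambda>y. J (x - y) * (indicator A y *\<^sub>R u y)) \<in> borel_measurable lebesgue"
      using J_shift_meas[OF H] borel_measurable_integrable[OF ui] by (rule borel_measurable_times)
    show "AE y in lebesgue. norm (J (x - y) * (indicator A y *\<^sub>R u y)) \<le> norm (J 0 * (indicator A y *\<^sub>R u y))"
    proof (rule AE_I2)
      fix y
      have "\<bar>J (x - y)\<bar> \<le> \<bar>J 0\<bar>" using hypH_bound[OF H, of "x - y"] hypH_bound[OF H, of 0] by simp
      then show "norm (J (x - y) * (indicator A y *\<^sub>R u y)) \<le> norm (J 0 * (indicator A y *\<^sub>R u y))"
        by (simp add: abs_mult mult_right_mono)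
    qed
  qed
qed

lemma J_cont:
  fixes u :: "'a::euclidean_space \<Rightarrow> real"
  assumes H: "hypH J" and u: "set_integrable lebesgue A u"
  shows "continuous_on UNIV (\<lambda>x. LINT y:A|lebesgue. J (x - y) * u y)"
  unfolding set_lebesgue_integral_def
proof (rule continuous_on_sequentiallyI)
  fix s :: "nat \<Rightarrow> 'a" and a assume s: "s \<longlonglongrightarrow> a"
  have ui: "integrable lebesgue (\<lambda>y. indicator A y *\<^sub>R u y)" using u by (simp add: set_integrable_def)
  have cJ: "continuous_on UNIV J" by (rule hypH_cont[OF H])
  show "(\<lambda>n. integral\<^sup>L lebesgue (\<lambda>y. indicator A y *\<^sub>R (J (s n - y) * u y))) \<longlonglongrightarrow>
        integral\<^sup>L lebesgue (\<lambda>y. indicator A y *\<^sub>R (J (a - y) * u y))"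
  proof (rule integral_dominated_convergence[where w = "\<lambda>y. J 0 * \<bar>indicator A y *\<^sub>R u y\<bar>"])
    show "(\<lambda>y. indicator A y *\<^sub>R (J (a - y) * u y)) \<in> borel_measurable lebesgue"
      using J_int[OF H u, of a] by (simp add: set_integrable_def borel_measurable_integrable)
    show "\<And>i. (\<lambda>y. indicator A y *\<^sub>R (J (s i - y) * u y)) \<in> borel_measurable lebesgue"
      using J_int[OF H u] by (simp add: set_integrable_def borel_measurable_integrable)
    show "integrable lebesgue (\<lambda>y. J 0 * \<bar>indicator A y *\<^sub>R u y\<bar>)"
      using ui by (intro integrable_mult_right integrable_abs)
    show "AE y in lebesgue. (\<lambda>i. indicator A y *\<^sub>R (J (s i - y) * u y)) \<longlonglongrightarrow> indicator A y *\<^sub>R (J (a - y) * u y)"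
    proof (rule AE_I2)
      fix y
      have "isCont J (a - y)" using cJ by (simp add: continuous_on_eq_continuous_at)
      moreover have "(\<lambda>i. s i - y) \<longlonglongrightarrow> a - y" using s by (intro tendsto_intros)
      ultimately have "(\<lambda>i. J (s i - y)) \<longlonglongrightarrow> J (a - y)" by (rule isCont_tendsto_compose)
      then show "(\<lambda>i. indicator A y *\<^sub>R (J (s i - y) * u y)) \<longlonglongrightarrow> indicator A y *\<^sub>R (J (a - y) * u y)"
        by (intro tendsto_intros)
    qed
    show "\<And>i. AE y in lebesgue. norm (indicator A y *\<^sub>R (J (s i - y) * u y)) \<le> J 0 * \<bar>indicator A y *\<^sub>R u y\<bar>"
    proof (rule AE_I2)
      fix i y
      have "\<bar>J (s i - y)\<bar> \<le> J 0" using hypH_bound[OF H, of "s i - y"] by simp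
      then show "norm (indicator A y *\<^sub>R (J (s i - y) * u y)) \<le> J 0 * \<bar>indicator A y *\<^sub>R u y\<bar>"
        by (simp add: abs_mult mult_right_mono mult.left_commute[of "indicator A y"])
    qed
  qed
qed


lemma CS_set:
  fixes u :: "'a::euclidean_space \<Rightarrow> real"
  assumes A: "A \<in> lmeasurable" and um: "u \<in> borel_measurable lebesgue"
    and u1: "set_integrable lebesgue A u" and u2: "set_integrable lebesgue A (\<lambda>x. (u x)\<^sup>2)"
  shows "(LINT x:A|lebesgue. \<bar>u x\<bar>)\<^sup>2 \<le> measure lebesgue A * (LINT x:A|lebesgue. (u x)\<^sup>2)"
proof -
  have As: "A \<in> sets lebesgue" and Af: "emeasure lebesgue A < \<infinity>" using A by (auto simp: fmeasurable_def)
  define f where "f x = ennreal (indicator A x * \<bar>u x\<bar>)" for x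
  define g where "g x = (indicator A x :: ennreal)" for x
  have fm: "f \<in> borel_measurable lebesgue" unfolding f_def using um As by measurable
  have gm: "g \<in> borel_measurable lebesgue" unfolding g_def using As by measurable
  have i1: "integrable lebesgue (\<lambda>x. indicator A x * \<bar>u x\<bar>)"
    using integrable_abs[OF u1[unfolded set_integrable_def]] by (simp add: abs_mult)
  have i2: "integrable lebesgue (\<lambda>x. indicator A x * (u x)\<^sup>2)"
    using u2 by (simp add: set_integrable_def)
  have e1: "(\<integral>\<^sup>+x. f x * g x \<partial>lebesgue) = ennreal (LINT x:A|lebesgue. \<bar>u x\<bar>)"
  proof -
    have "(\<integral>\<^sup>+x. f x * g x \<partial>lebesgue) = (\<integral>\<^sup>+x. ennreal (indicator A x * \<bar>u x\<bar>) \<partial>lebesgue)"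
      by (rule nn_integral_cong) (auto simp: f_def g_def indicator_def)
    also have "\<dots> = ennreal (LINT x:A|lebesgue. \<bar>u x\<bar>)"
      using i1 by (subst nn_integral_eq_integral) (auto simp: set_lebesgue_integral_def)
    finally show ?thesis .
  qed
  have e2: "(\<integral>\<^sup>+x. f x ^ 2 \<partial>lebesgue) = ennreal (LINT x:A|lebesgue. (u x)\<^sup>2)"
  proof -
    have "(\<integral>\<^sup>+x. f x ^ 2 \<partial>lebesgue) = (\<integral>\<^sup>+x. ennreal (indicator A x * (u x)\<^sup>2) \<partial>lebesgue)"
      by (rule nn_integral_cong) (auto simp: f_def indicator_def ennreal_power power_abs)
    also have "\<dots> = ennreal (LINT x:A|lebesgue. (u x)\<^sup>2)"
      using i2 by (subst nn_integral_eq_integral) (auto simp: set_lebesgue_integral_def)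
    finally show ?thesis .
  qed
  have e3: "(\<integral>\<^sup>+x. g x ^ 2 \<partial>lebesgue) = ennreal (measure lebesgue A)"
  proof -
    have "(\<integral>\<^sup>+x. g x ^ 2 \<partial>lebesgue) = (\<integral>\<^sup>+x. indicator A x \<partial>lebesgue)"
      by (rule nn_integral_cong) (auto simp: g_def indicator_def)
    also have "\<dots> = emeasure lebesgue A" using As by simp
    also have "\<dots> = ennreal (measure lebesgue A)" using Af by (simp add: emeasure_eq_ennreal_measure)
    finally show ?thesis .
  qed
  have "(ennreal (LINT x:A|lebesgue. \<bar>u x\<bar>))\<^sup>2 \<le> ennreal (LINT x:A|lebesgue. (u x)\<^sup>2) * ennreal (measure lebesgue A)"
    using Cauchy_Schwarz_nn_integral[OF fm gm] unfolding e1 e2 e3 .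
  moreover have "0 \<le> (LINT x:A|lebesgue. \<bar>u x\<bar>)" unfolding set_lebesgue_integral_def by (intro integral_nonneg_AE AE_I2) simp
  moreover have "0 \<le> (LINT x:A|lebesgue. (u x)\<^sup>2)" unfolding set_lebesgue_integral_def by (intro integral_nonneg_AE AE_I2) simp
  ultimately have "ennreal ((LINT x:A|lebesgue. \<bar>u x\<bar>)\<^sup>2) \<le> ennreal (measure lebesgue A * (LINT x:A|lebesgue. (u x)\<^sup>2))"
  proof -
    assume a: "(ennreal (LINT x:A|lebesgue. \<bar>u x\<bar>))\<^sup>2 \<le> ennreal (LINT x:A|lebesgue. (u x)\<^sup>2) * ennreal (measure lebesgue A)"
      and b: "0 \<le> (LINT x:A|lebesgue. \<bar>u x\<bar>)" and c: "0 \<le> (LINT x:A|lebesgue. (u x)\<^sup>2)"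
    have "ennreal (LINT x:A|lebesgue. (u x)\<^sup>2) * ennreal (measure lebesgue A) = ennreal (measure lebesgue A * (LINT x:A|lebesgue. (u x)\<^sup>2))"
      using c by (simp add: ennreal_mult[symmetric] mult.commute)
    with a b show ?thesis by (simp add: ennreal_power)
  qed
  moreover have "0 \<le> measure lebesgue A * (LINT x:A|lebesgue. (u x)\<^sup>2)"
    using \<open>0 \<le> (LINT x:A|lebesgue. (u x)\<^sup>2)\<close> by simp
  ultimately show ?thesis by (simp add: ennreal_le_iff)
qed


lemma L2_sub:
  fixes u :: "'a::euclidean_space \<Rightarrow> real"
  assumes "in_L2 D u" "A \<subseteq> D" "A \<in> sets lebesgue"
  shows "(LINT x:A|lebesgue. (u x)\<^sup>2) \<le> (LINT x:D|lebesgue. (u x)\<^sup>2)"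
  unfolding set_lebesgue_integral_def
proof (rule integral_mono')
  show "integrable lebesgue (\<lambda>x. indicat_real D x *\<^sub>R (u x)\<^sup>2)"
    using assms(1) by (simp add: in_L2_def set_integrable_def)
  fix x show "indicat_real A x *\<^sub>R (u x)\<^sup>2 \<le> indicat_real D x *\<^sub>R (u x)\<^sup>2"
    using assms(2) by (cases "x \<in> A"; cases "x \<in> D") auto
  show "0 \<le> indicat_real D x *\<^sub>R (u x)\<^sup>2" by simp
qed

lemma B_bound:
  fixes u h :: "'a::euclidean_space \<Rightarrow> real"
  assumes L2: "in_L2 D u" and AD: "A \<subseteq> D" and A: "A \<in> lmeasurable"
    and hm: "h \<in> borel_measurable lebesgue" and hb: "\<And>y. \<bar>h y\<bar> \<le> K * (indicator A y * \<bar>u y\<bar>)"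
    and K: "0 \<le> K"
  shows "(integral\<^sup>L lebesgue h)\<^sup>2 \<le> K\<^sup>2 * measure lebesgue A * (LINT x:D|lebesgue. (u x)\<^sup>2)"
proof -
  have As: "A \<in> sets lebesgue" using A by (auto simp: fmeasurable_def)
  have um: "u \<in> borel_measurable lebesgue" using L2 by (simp add: in_L2_def)
  have u1: "set_integrable lebesgue A u" by (rule L2_int[OF L2 AD A])
  have u2: "set_integrable lebesgue A (\<lambda>x. (u x)\<^sup>2)"
    using L2 AD As unfolding in_L2_def by (blast intro: set_integrable_subset)
  have i1: "integrable lebesgue (\<lambda>x. indicator A x * \<bar>u x\<bar>)"
    using integrable_abs[OF u1[unfolded set_integrable_def]] by (simp add: abs_mult)
  have iK: "integrable lebesgue (\<lambda>x. K * (indicator A x * \<bar>u x\<bar>))"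
    using i1 by (rule integrable_mult_right)
  have hi: "integrable lebesgue h"
    by (rule Bochner_Integration.integrable_bound[OF iK hm]) (use hb K in \<open>auto intro!: AE_I2\<close>)
  define I where "I = (LINT x:A|lebesgue. \<bar>u x\<bar>)"
  have I0: "0 \<le> I" unfolding I_def set_lebesgue_integral_def by (intro integral_nonneg_AE AE_I2) simp
  have "\<bar>integral\<^sup>L lebesgue h\<bar> \<le> integral\<^sup>L lebesgue (\<lambda>x. K * (indicator A x * \<bar>u x\<bar>))"
    by (rule integral_abs_bound_integral[OF hi iK hb])
  also have "\<dots> = K * I" unfolding I_def set_lebesgue_integral_def by simp
  finally have hI: "\<bar>integral\<^sup>L lebesgue h\<bar> \<le> K * I" .
  have "(integral\<^sup>L lebesgue h)\<^sup>2 = \<bar>integral\<^sup>L lebesgue h\<bar>\<^sup>2" by simp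
  also have "\<dots> \<le> (K * I)\<^sup>2" by (rule power_mono[OF hI]) simp
  also have "\<dots> = K\<^sup>2 * I\<^sup>2" by (simp add: power_mult_distrib)
  also have "\<dots> \<le> K\<^sup>2 * (measure lebesgue A * (LINT x:A|lebesgue. (u x)\<^sup>2))"
    unfolding I_def by (rule mult_left_mono[OF CS_set[OF A um u1 u2]]) simp
  also have "\<dots> \<le> K\<^sup>2 * (measure lebesgue A * (LINT x:D|lebesgue. (u x)\<^sup>2))"
    by (intro mult_left_mono L2_sub[OF L2 AD As]) auto
  finally show ?thesis by (simp add: mult.assoc)
qed


lemma main:
  fixes J :: "'a::euclidean_space \<Rightarrow> real" and u :: "'a \<Rightarrow> real"
  assumes H: "hypH J" and Db: "bounded D" and Ds: "D \<in> sets lebesgue"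
    and o1: "open \<Omega>1" and b1: "bounded \<Omega>1" and s1: "\<Omega>1 \<subseteq> D"
    and o2: "open \<Omega>2" and b2: "bounded \<Omega>2" and s2: "\<Omega>2 \<subseteq> D"
    and L2: "in_L2 D u"
  shows "in_L2 D (\<lambda>x. Jt J \<Omega>1 u x - Jt J \<Omega>2 u x) \<and>
           L2norm D (\<lambda>x. Jt J \<Omega>1 u x - Jt J \<Omega>2 u x)
             \<le> sqrt (2 * (\<bar>measure lebesgue \<Omega>1\<bar> + \<bar>measure lebesgue \<Omega>2\<bar>) + 1) * Linf_norm J
               * (measure lebesgue (\<Omega>1 - \<Omega>2) + measure lebesgue (\<Omega>2 - \<Omega>1)) powr (1/2)
               * L2norm D u"
proof -
  define K where "K = J 0"
  have K0: "0 \<le> K" unfolding K_def using hypH_bound[OF H] by simp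
  have hJ: "\<And>z. \<bar>J z\<bar> \<le> K" unfolding K_def using hypH_bound[OF H] by simp
  have hb1: "\<And>x y. \<bar>J (x - y) * u y\<bar> \<le> K * \<bar>u y\<bar>"
    by (simp add: abs_mult mult_right_mono hJ)
  have Linf: "Linf_norm J = K" unfolding K_def by (rule Linf_hypH[OF H])
  have O1: "\<Omega>1 \<in> lmeasurable" by (rule lmeasurable_open[OF b1 o1])
  have O2: "\<Omega>2 \<in> lmeasurable" by (rule lmeasurable_open[OF b2 o2])
  have O1s: "\<Omega>1 \<in> sets lebesgue" using O1 by (auto simp: fmeasurable_def)
  have O2s: "\<Omega>2 \<in> sets lebesgue" using O2 by (auto simp: fmeasurable_def)
  have Dm: "D \<in> lmeasurable" by (rule bounded_set_imp_lmeasurable[OF Db Ds])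
  have um: "u \<in> borel_measurable lebesgue" using L2 by (simp add: in_L2_def)
  have u1: "set_integrable lebesgue \<Omega>1 u" by (rule L2_int[OF L2 s1 O1])
  have u2: "set_integrable lebesgue \<Omega>2 u" by (rule L2_int[OF L2 s2 O2])
  define F1 where "F1 x = (LINT y:\<Omega>1|lebesgue. J (x - y) * u y)" for x
  define F2 where "F2 x = (LINT y:\<Omega>2|lebesgue. J (x - y) * u y)" for x
  have F1m: "F1 \<in> borel_measurable lebesgue"
    unfolding F1_def by (rule cont_leb_meas[OF J_cont[OF H u1]])
  have F2m: "F2 \<in> borel_measurable lebesgue"
    unfolding F2_def by (rule cont_leb_meas[OF J_cont[OF H u2]])
  define f where "f x = Jt J \<Omega>1 u x - Jt J \<Omega>2 u x" for x
  have f_eq: "f = (\<lambda>x. indicator \<Omega>1 x * F1 x - indicator \<Omega>2 x * F2 x)"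
    by (auto simp: fun_eq_iff f_def Jt_def F1_def F2_def indicator_def)
  have fm: "f \<in> borel_measurable lebesgue"
    unfolding f_eq using F1m F2m O1s O2s
    by (intro borel_measurable_diff borel_measurable_times borel_measurable_indicator) auto
  define U2 where "U2 = (LINT x:D|lebesgue. (u x)\<^sup>2)"
  have U0: "0 \<le> U2" unfolding U2_def set_lebesgue_integral_def by (intro integral_nonneg_AE AE_I2) simp
  define a where "a = measure lebesgue \<Omega>1"
  define b where "b = measure lebesgue \<Omega>2"
  define m12 where "m12 = measure lebesgue (\<Omega>1 \<inter> \<Omega>2)"
  define m1 where "m1 = measure lebesgue (\<Omega>1 - \<Omega>2)"
  define m2 where "m2 = measure lebesgue (\<Omega>2 - \<Omega>1)"
  define d where "d = m1 + m2"
  define S where "S = (\<Omega>1 - \<Omega>2) \<union> (\<Omega>2 - \<Omega>1)"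
  have M1: "\<Omega>1 - \<Omega>2 \<in> lmeasurable" by (rule fmeasurable_Diff[OF O1 O2s])
  have M2: "\<Omega>2 - \<Omega>1 \<in> lmeasurable" by (rule fmeasurable_Diff[OF O2 O1s])
  have M12: "\<Omega>1 \<inter> \<Omega>2 \<in> lmeasurable" by (rule fmeasurable_Int_fmeasurable[OF O1 O2s])
  have Sm: "S \<in> lmeasurable" unfolding S_def using M1 M2 by (rule fmeasurable.Un)
  have mS: "measure lebesgue S = d"
    unfolding S_def d_def m1_def m2_def
    using M1 M2 by (intro measure_Union) (auto simp: fmeasurable_def)
  have SD: "S \<subseteq> D" using s1 s2 by (auto simp: S_def)
  have a0: "0 \<le> a" "0 \<le> b" "0 \<le> m12" "0 \<le> m1" "0 \<le> m2" "0 \<le> d"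
    by (simp_all add: a_def b_def m12_def m1_def m2_def d_def)
  define g where "g x = d * indicator (\<Omega>1 \<inter> \<Omega>2) x + a * indicator (\<Omega>1 - \<Omega>2) x + b * indicator (\<Omega>2 - \<Omega>1) x" for x
  have hI: "\<And>x \<Omega>. (LINT y:\<Omega>|lebesgue. J (x - y) * u y) = integral\<^sup>L lebesgue (\<lambda>y. indicator \<Omega> y *\<^sub>R (J (x - y) * u y))"
    by (simp add: set_lebesgue_integral_def)
  have pw: "(f x)\<^sup>2 \<le> K\<^sup>2 * U2 * g x" for x
  proof -
    consider "x \<in> \<Omega>1" "x \<in> \<Omega>2" | "x \<in> \<Omega>1" "x \<notin> \<Omega>2" | "x \<notin> \<Omega>1" "x \<in> \<Omega>2" | "x \<notin> \<Omega>1" "x \<notin> \<Omega>2"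
      by blast
    then show ?thesis
    proof cases
      case 1
      define h where "h y = indicator \<Omega>1 y *\<^sub>R (J (x - y) * u y) - indicator \<Omega>2 y *\<^sub>R (J (x - y) * u y)" for y
      have i1: "integrable lebesgue (\<lambda>y. indicator \<Omega>1 y *\<^sub>R (J (x - y) * u y))"
        using J_int[OF H u1, of x] by (simp add: set_integrable_def)
      have i2: "integrable lebesgue (\<lambda>y. indicator \<Omega>2 y *\<^sub>R (J (x - y) * u y))"
        using J_int[OF H u2, of x] by (simp add: set_integrable_def)
      have "f x = F1 x - F2 x" using 1 by (simp add: f_eq)
      also have "\<dots> = integral\<^sup>L lebesgue h"
        unfolding F1_def F2_def hI h_def by (rule Bochner_Integration.integral_diff[OF i1 i2, symmetric])
      finally have fx: "f x = integral\<^sup>L lebesgue h" .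
      have hm: "h \<in> borel_measurable lebesgue"
        unfolding h_def using i1 i2 by (intro borel_measurable_diff borel_measurable_integrable)
      have hb: "\<bar>h y\<bar> \<le> K * (indicator S y * \<bar>u y\<bar>)" for y
        using hb1[of x y] by (cases "y \<in> \<Omega>1"; cases "y \<in> \<Omega>2") (auto simp: h_def S_def)
      have "(f x)\<^sup>2 \<le> K\<^sup>2 * measure lebesgue S * U2"
        unfolding fx U2_def by (rule B_bound[OF L2 SD Sm hm hb K0])
      also have "\<dots> = K\<^sup>2 * U2 * g x" using 1 by (simp add: mS g_def)
      finally show ?thesis .
    next
      case 2
      define h where "h y = indicator \<Omega>1 y *\<^sub>R (J (x - y) * u y)" for y
      have i1: "integrable lebesgue h"
        using J_int[OF H u1, of x] by (simp add: set_integrable_def h_def[abs_def])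
      have fx: "f x = integral\<^sup>L lebesgue h" using 2 by (simp add: f_eq F1_def hI h_def[abs_def])
      have hb: "\<bar>h y\<bar> \<le> K * (indicator \<Omega>1 y * \<bar>u y\<bar>)" for y
        using hb1[of x y] by (cases "y \<in> \<Omega>1") (auto simp: h_def)
      have "(f x)\<^sup>2 \<le> K\<^sup>2 * measure lebesgue \<Omega>1 * U2"
        unfolding fx U2_def by (rule B_bound[OF L2 s1 O1 borel_measurable_integrable[OF i1] hb K0])
      also have "\<dots> = K\<^sup>2 * U2 * g x" using 2 by (simp add: g_def a_def)
      finally show ?thesis .
    next
      case 3
      define h where "h y = indicator \<Omega>2 y *\<^sub>R (J (x - y) * u y)" for y
      have i1: "integrable lebesgue h"
        using J_int[OF H u2, of x] by (simp add: set_integrable_def h_def[abs_def])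
      have fx: "(f x)\<^sup>2 = (integral\<^sup>L lebesgue h)\<^sup>2" using 3 by (simp add: f_eq F2_def hI h_def[abs_def])
      have hb: "\<bar>h y\<bar> \<le> K * (indicator \<Omega>2 y * \<bar>u y\<bar>)" for y
        using hb1[of x y] by (cases "y \<in> \<Omega>2") (auto simp: h_def)
      have "(f x)\<^sup>2 \<le> K\<^sup>2 * measure lebesgue \<Omega>2 * U2"
        unfolding fx U2_def by (rule B_bound[OF L2 s2 O2 borel_measurable_integrable[OF i1] hb K0])
      also have "\<dots> = K\<^sup>2 * U2 * g x" using 3 by (simp add: g_def b_def)
      finally show ?thesis .
    next
      case 4
      then show ?thesis by (simp add: f_eq g_def)
    qed
  qed
  have gb: "g x \<le> d + a + b" for x
    unfolding g_def using a0
    by (intro add_mono mult_right_le_one_le) (auto simp: indicator_def)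
  have g0: "0 \<le> g x" for x unfolding g_def using a0 by simp
  have gD: "indicator D x * g x = g x" for x
    using s1 s2 by (cases "x \<in> D") (auto simp: g_def indicator_def)
  have ig: "integrable lebesgue g"
    unfolding g_def[abs_def] using M1 M2 M12
    by (intro Bochner_Integration.integrable_add integrable_mult_right integrable_real_indicator)
       (auto simp: fmeasurable_def)
  have intg: "integral\<^sup>L lebesgue g = d * m12 + a * m1 + b * m2"
  proof -
    have i12: "integrable lebesgue (\<lambda>x. d * indicator (\<Omega>1 \<inter> \<Omega>2) x :: real)"
      using M12 by (intro integrable_mult_right integrable_real_indicator) (auto simp: fmeasurable_def)
    have i1: "integrable lebesgue (\<lambda>x. a * indicator (\<Omega>1 - \<Omega>2) x :: real)"
      using M1 by (intro integrable_mult_right integrable_real_indicator) (auto simp: fmeasurable_def)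
    have i2: "integrable lebesgue (\<lambda>x. b * indicator (\<Omega>2 - \<Omega>1) x :: real)"
      using M2 by (intro integrable_mult_right integrable_real_indicator) (auto simp: fmeasurable_def)
    show ?thesis unfolding g_def[abs_def]
      using i12 i1 i2 by (simp add: m12_def m1_def m2_def)
  qed
  define Bd where "Bd = K\<^sup>2 * U2 * (d + a + b)"
  have KU: "0 \<le> K\<^sup>2 * U2" using U0 by simp
  have fB: "(f x)\<^sup>2 \<le> Bd" for x
  proof -
    have "(f x)\<^sup>2 \<le> K\<^sup>2 * U2 * g x" by (rule pw)
    also have "\<dots> \<le> K\<^sup>2 * U2 * (d + a + b)" by (rule mult_left_mono[OF gb KU])
    finally show ?thesis unfolding Bd_def .
  qed
  have DS: "D \<in> sets lebesgue" "emeasure lebesgue D < \<infinity>" using Dm by (auto simp: fmeasurable_def)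
  have f2i: "set_integrable lebesgue D (\<lambda>x. (f x)\<^sup>2)"
    unfolding set_integrable_def
  proof (rule Bochner_Integration.integrable_bound)
    show "integrable lebesgue (\<lambda>x. indicator D x * Bd)"
      by (intro integrable_mult_left integrable_real_indicator DS)
    show "(\<lambda>x. indicat_real D x *\<^sub>R (f x)\<^sup>2) \<in> borel_measurable lebesgue"
      using fm DS(1) by measurable
    show "AE x in lebesgue. norm (indicat_real D x *\<^sub>R (f x)\<^sup>2) \<le> norm (indicator D x * Bd)"
    proof (rule AE_I2)
      fix x
      have "0 \<le> (f x)\<^sup>2" by simp
      then show "norm (indicat_real D x *\<^sub>R (f x)\<^sup>2) \<le> norm (indicator D x * Bd)"
        using fB[of x] by (cases "x \<in> D") auto
    qed
  qed
  have inL2: "in_L2 D f" unfolding in_L2_def using fm f2i by simp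
  have "(LINT x:D|lebesgue. (f x)\<^sup>2) \<le> integral\<^sup>L lebesgue (\<lambda>x. K\<^sup>2 * U2 * g x)"
    unfolding set_lebesgue_integral_def
  proof (rule integral_mono')
    show "integrable lebesgue (\<lambda>x. K\<^sup>2 * U2 * g x)" using ig by (rule integrable_mult_right)
    fix x
    show "indicat_real D x *\<^sub>R (f x)\<^sup>2 \<le> K\<^sup>2 * U2 * g x"
      using pw[of x] mult_nonneg_nonneg[OF KU g0[of x]] by (cases "x \<in> D") auto
    show "0 \<le> K\<^sup>2 * U2 * g x" using KU g0[of x] by simp
  qed
  also have "\<dots> = K\<^sup>2 * U2 * (d * m12 + a * m1 + b * m2)" using intg by simp
  also have "\<dots> \<le> K\<^sup>2 * U2 * ((2 * (\<bar>a\<bar> + \<bar>b\<bar>) + 1) * d)"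
  proof (rule mult_left_mono[OF _ KU])
    have "m12 \<le> a" unfolding m12_def a_def by (rule measure_mono_fmeasurable[OF _ _ O1]) (use M12 in \<open>auto simp: fmeasurable_def\<close>)
    moreover have "m1 \<le> d" "m2 \<le> d" using a0 by (auto simp: d_def)
    ultimately have "d * m12 + a * m1 + b * m2 \<le> d * a + a * d + b * d"
      using a0 by (intro add_mono mult_left_mono) auto
    moreover have "(2 * (\<bar>a\<bar> + \<bar>b\<bar>) + 1) * d = 2 * (a * d) + 2 * (b * d) + d"
      using a0 by (simp add: algebra_simps)
    moreover have "0 \<le> b * d" using a0 by simp
    ultimately show "d * m12 + a * m1 + b * m2 \<le> (2 * (\<bar>a\<bar> + \<bar>b\<bar>) + 1) * d"
      using a0 mult.commute[of d a] by linarith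
  qed
  finally have intf: "(LINT x:D|lebesgue. (f x)\<^sup>2) \<le> K\<^sup>2 * U2 * ((2 * (\<bar>a\<bar> + \<bar>b\<bar>) + 1) * d)" .
  define c where "c = 2 * (\<bar>a\<bar> + \<bar>b\<bar>) + 1"
  have c0: "0 \<le> c" unfolding c_def by simp
  have "L2norm D f = sqrt (LINT x:D|lebesgue. (f x)\<^sup>2)" by (simp add: L2norm_def)
  also have "\<dots> \<le> sqrt (K\<^sup>2 * U2 * (c * d))" using intf unfolding c_def by (rule real_sqrt_le_mono)
  also have "\<dots> = sqrt c * K * sqrt d * sqrt U2"
    using K0 by (simp add: real_sqrt_mult mult_ac)
  also have "\<dots> = sqrt c * Linf_norm J * d powr (1/2) * L2norm D u"
    using a0 by (simp add: Linf powr_half_sqrt L2norm_def U2_def)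
  finally have "L2norm D f \<le> sqrt c * Linf_norm J * d powr (1/2) * L2norm D u" .
  then show ?thesis using inL2
    unfolding f_def[abs_def] c_def a_def b_def d_def m1_def m2_def by simp
qed


lemma C_pos: "0 < sqrt (2 * (\<bar>a\<bar> + \<bar>b\<bar>) + (1::real))"
proof -
  have "0 < 2 * (\<bar>a\<bar> + \<bar>b\<bar>) + (1::real)" by (simp add: add_nonneg_pos)
  then show ?thesis by simp
qed

theorem lemma3p1:
  "\<exists>C :: real \<Rightarrow> real \<Rightarrow> real. (\<forall>a b. 0 < C a b) \<and>
     (\<forall>(J :: 'a::euclidean_space \<Rightarrow> real) D \<Omega>1 \<Omega>2.
        hypH J \<and> bounded D \<and> D \<in> sets lebesgue
        \<and> open \<Omega>1 \<and> bounded \<Omega>1 \<and> \<Omega>1 \<subseteq> D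
        \<and> open \<Omega>2 \<and> bounded \<Omega>2 \<and> \<Omega>2 \<subseteq> D \<longrightarrow>
        (\<forall>u. in_L2 D u \<longrightarrow>
           in_L2 D (\<lambda>x. Jt J \<Omega>1 u x - Jt J \<Omega>2 u x) \<and>
           L2norm D (\<lambda>x. Jt J \<Omega>1 u x - Jt J \<Omega>2 u x)
             \<le> C (measure lebesgue \<Omega>1) (measure lebesgue \<Omega>2) * Linf_norm J
               * (measure lebesgue (\<Omega>1 - \<Omega>2) + measure lebesgue (\<Omega>2 - \<Omega>1)) powr (1/2)
               * L2norm D u))"
  apply (rule exI[of _ "\<lambda>a b. sqrt (2 * (\<bar>a\<bar> + \<bar>b\<bar>) + 1)"])
  apply (intro conjI allI impI)
    apply (rule C_pos)
   apply (elim conjE)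
   apply (rule main[THEN conjunct1]; assumption)
  apply (elim conjE)
  apply (rule main[THEN conjunct2]; assumption)
  done

end
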